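(* Let $V$ be a finite-dimensional real vector space, $\mu$ a probability measure on $\mathrm{GL}(V)$ with finite first moment, $W$ a $\Gamma_\mu$-invariant subspace, and $\bar\nu$ a $\mu$-stationary ergodic probability measure on $\mathbb{P}(V/W)$. If $\nu$ is a $\mu$-stationary lift of $\bar\nu$ (a $\mu$-stationary probability on $\mathbb{P}(V)\setminus\mathbb{P}(W)$ projecting to $\bar\nu$), then $\alpha(\bar\nu)=\alpha(\nu)$.
   Context: Finite first moment: $\int\log\max\{\|g\|,\|g^{-1}\|\}d\mu<\infty$. $\Gamma_\mu$ is the closed subsemigroup generated by the support of $\mu$. For a probability $\eta$ on $\mathbb{P}(E)$ ($E=V$ or $V/W$, with norms), $\alpha(\eta):=\iint\log\frac{\|gv\|}{\|v\|}\,d\mu(g)\,d\eta(\mathbb{R}v)$. Projection to $\mathbb{P}(V/W)$ is via the map induced by $V\to V/W$. Stationary: $\eta=\int g_*\eta\,d\mu(g)$; ergodic: extremal among stationary probabilities. *)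

theory Defs
  imports "HOL-Probability.Probability"
begin

text \<open>V is modelled as real^'n (Euclidean norm); GL(V) as the invertible matrices.\<close>

definition GL :: "(real^'n^'n) set" where
  "GL = {g. invertible g}"

definition supp :: "(real^'n^'n) measure \<Rightarrow> (real^'n^'n) set" where
  "supp \<mu> = {g \<in> GL. \<forall>U. open U \<longrightarrow> g \<in> U \<longrightarrow> emeasure \<mu> U > 0}"

definition Gamma :: "(real^'n^'n) measure \<Rightarrow> (real^'n^'n) set" where
  "Gamma \<mu> = \<Inter>{T. supp \<mu> \<subseteq> T \<and> T \<subseteq> GL \<and> (\<forall>a\<in>T. \<forall>b\<in>T. a ** b \<in> T)
                   \<and> closedin (top_of_set GL) T}"

text \<open>Projective space P(V/W): its points are the subspaces span(W + Rv), v not in W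
  (i.e. lines of V/W).  For W = {0} this is P(V), points being the lines span{v}.\<close>
definition proj_pts :: "(real^'n) set \<Rightarrow> (real^'n) set set" where
  "proj_pts W = {span (insert v W) | v. v \<notin> W}"

definition proj_space :: "(real^'n) set \<Rightarrow> (real^'n) set measure" where
  "proj_space W = sigma (proj_pts W)
     {A. A \<subseteq> proj_pts W \<and> {v. v \<notin> W \<and> span (insert v W) \<in> A} \<in> sets borel}"

definition act :: "real^'n^'n \<Rightarrow> (real^'n) set \<Rightarrow> (real^'n) set" where
  "act g L = (\<lambda>x. g *v x) ` L"

definition stationary :: "(real^'n^'n) measure \<Rightarrow> (real^'n) set \<Rightarrow> (real^'n) set measure \<Rightarrow> bool" where
  "stationary \<mu> W \<eta> \<longleftrightarrow> prob_space \<eta> \<and> sets \<eta> = sets (proj_space W) \<and>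
     (\<forall>A\<in>sets \<eta>. emeasure \<eta> A = (\<integral>\<^sup>+ g. emeasure \<eta> (act g -` A \<inter> space \<eta>) \<partial>\<mu>))"

definition ergodic :: "(real^'n^'n) measure \<Rightarrow> (real^'n) set \<Rightarrow> (real^'n) set measure \<Rightarrow> bool" where
  "ergodic \<mu> W \<eta> \<longleftrightarrow> stationary \<mu> W \<eta> \<and>
     (\<forall>\<eta>1 \<eta>2 (t::real). stationary \<mu> W \<eta>1 \<and> stationary \<mu> W \<eta>2 \<and> 0 < t \<and> t < 1 \<and>
        (\<forall>A\<in>sets \<eta>. emeasure \<eta> A = ennreal t * emeasure \<eta>1 A + ennreal (1 - t) * emeasure \<eta>2 A)
        \<longrightarrow> \<eta>1 = \<eta> \<and> \<eta>2 = \<eta>)"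

definition rep :: "(real^'n) set \<Rightarrow> (real^'n) set \<Rightarrow> real^'n" where
  "rep W L = (SOME v. v \<in> L \<and> v \<notin> W)"

text \<open>alpha(eta) with the quotient norm |v + W| = infdist v W on V/W
  (for W = {0} this is the norm of V).\<close>
definition alpha :: "(real^'n^'n) measure \<Rightarrow> (real^'n) set \<Rightarrow> (real^'n) set measure \<Rightarrow> real" where
  "alpha \<mu> W \<eta> = (\<integral>L. (\<integral>g. ln (infdist (g *v rep W L) W / infdist (rep W L) W) \<partial>\<mu>) \<partial>\<eta>)"

end

theory Submission
  imports Defs
begin


definition cf :: "real^'n \<Rightarrow> real" where
 "cf v = (\<Sum>i\<in>UNIV. if v$i \<noteq> 0 \<and> (\<forall>j. to_nat j < to_nat i \<longrightarrow> v$j = 0) then inverse (v$i) else 0)"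

definition sec :: "real^'n \<Rightarrow> real^'n" where "sec v = cf v *\<^sub>R v"

lemma cf_scale: assumes "t \<noteq> 0" shows "cf (t *\<^sub>R v) = inverse t * cf v"
  unfolding cf_def sum_distrib_left
  by (rule sum.cong) (use assms in auto)

lemma cf_nz: assumes "v \<noteq> (0::real^'n)" shows "cf v \<noteq> 0"
proof -
  have "\<exists>i. v$i \<noteq> 0" using assms by (metis vec_eq_iff zero_index)
  then obtain i0 where i0: "v$i0 \<noteq> 0" "\<And>j. v$j \<noteq> 0 \<Longrightarrow> to_nat i0 \<le> to_nat j"
    using ex_has_least_nat[of "\<lambda>i. v$i \<noteq> 0" _ to_nat] by metis
  have c: "(v$i0 \<noteq> 0 \<and> (\<forall>j. to_nat j < to_nat i0 \<longrightarrow> v$j = 0))" using i0 by force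
  have o: "\<not> (v$i \<noteq> 0 \<and> (\<forall>j. to_nat j < to_nat i \<longrightarrow> v$j = 0))" if "i \<noteq> i0" for i
  proof
    assume h: "v$i \<noteq> 0 \<and> (\<forall>j. to_nat j < to_nat i \<longrightarrow> v$j = 0)"
    have "to_nat i0 \<le> to_nat i" using i0 h by auto
    moreover have "to_nat i \<noteq> to_nat i0" using that by simp
    ultimately have "to_nat i0 < to_nat i" using that by (simp add: order_less_le)
    then show False using h i0 by auto
  qed
  have "cf v = inverse (v$i0)"
    unfolding cf_def
  proof (subst sum.remove[of _ i0])
    have "(\<Sum>i\<in>UNIV - {i0}. if v$i \<noteq> 0 \<and> (\<forall>j. to_nat j < to_nat i \<longrightarrow> v$j = 0) then inverse (v$i) else 0) = 0"
      proof (rule sum.neutral, rule ballI)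
        fix i assume "i \<in> UNIV - {i0}"
        then have "i \<noteq> i0" by simp
        from o[OF this] show "(if v$i \<noteq> 0 \<and> (\<forall>j. to_nat j < to_nat i \<longrightarrow> v$j = 0) then inverse (v$i) else 0) = 0"
          by (simp only: if_False)
      qed
    then show "(if v $ i0 \<noteq> 0 \<and> (\<forall>j. to_nat j < to_nat i0 \<longrightarrow> v $ j = 0) then inverse (v $ i0) else 0) +
    (\<Sum>i\<in>UNIV - {i0}. if v$i \<noteq> 0 \<and> (\<forall>j. to_nat j < to_nat i \<longrightarrow> v$j = 0) then inverse (v$i) else 0) = inverse (v $ i0)"
      using c by simp
  qed auto
  then show ?thesis using i0 by simp
qed

lemma sec_scale: "t \<noteq> 0 \<Longrightarrow> sec (t *\<^sub>R v) = sec v"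
  unfolding sec_def by (simp add: cf_scale)

lemma sec_nz: "v \<noteq> 0 \<Longrightarrow> sec v \<noteq> 0"
  unfolding sec_def using cf_nz by auto

lemma cf_meas: "cf \<in> borel_measurable (borel :: (real^'n) measure)"
  unfolding cf_def by measurable

lemma sec_meas: "sec \<in> borel_measurable (borel :: (real^'n) measure)"
  unfolding sec_def using cf_meas by measurable



lemma space_proj[simp]: "space (proj_space W) = proj_pts W"
  unfolding proj_space_def by (simp add: space_measure_of_conv)

lemma gen_sets:
  assumes "A \<subseteq> proj_pts W" "{v. v \<notin> W \<and> span (insert v W) \<in> A} \<in> sets borel"
  shows "A \<in> sets (proj_space W)"
proof -
  have "sets (proj_space W) = sigma_sets (proj_pts W)
     {A. A \<subseteq> proj_pts W \<and> {v. v \<notin> W \<and> span (insert v W) \<in> A} \<in> sets borel}"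
    unfolding proj_space_def by (rule sets_measure_of) auto
  then show ?thesis using assms by (auto intro: sigma_sets.Basic)
qed

lemma meas_into:
  assumes "f \<in> space M \<rightarrow> proj_pts W"
    and "\<And>A. A \<subseteq> proj_pts W \<Longrightarrow> {v. v \<notin> W \<and> span (insert v W) \<in> A} \<in> sets borel \<Longrightarrow> f -` A \<inter> space M \<in> sets M"
  shows "f \<in> measurable M (proj_space W)"
  unfolding proj_space_def by (rule measurable_measure_of) (use assms in auto)

lemma pts_in: "v \<notin> W \<Longrightarrow> span (insert v W) \<in> proj_pts W"
  unfolding proj_pts_def by auto

lemma closedW: "subspace (W::(real^'n) set) \<Longrightarrow> -W \<in> sets borel"
  using closed_subspace[of W] by (simp add: borel_open open_Compl)

lemma meas_out:
  fixes G :: "real^'n \<Rightarrow> 'b::topological_space"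
  assumes W: "subspace W" and G: "G \<in> borel_measurable borel"
    and FG: "\<And>v. v \<notin> W \<Longrightarrow> F (span (insert v W)) = G v"
  shows "F \<in> borel_measurable (proj_space W)"
proof (rule measurableI)
  fix A :: "'b set" assume A: "A \<in> sets borel"
  show "F -` A \<inter> space (proj_space W) \<in> sets (proj_space W)"
  proof (rule gen_sets)
    show "F -` A \<inter> space (proj_space W) \<subseteq> proj_pts W" by simp
    have "{v. v \<notin> W \<and> span (insert v W) \<in> F -` A \<inter> space (proj_space W)} = -W \<inter> (G -` A \<inter> space borel)"
      using FG pts_in by auto
    also have "\<dots> \<in> sets borel" using closedW[OF W] G A by auto
    finally show "{v. v \<notin> W \<and> span (insert v W) \<in> F -` A \<inter> space (proj_space W)} \<in> sets borel" .
  qed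
qed auto

lemma span_ins0: "span (insert v {0}) = span {v}"
  by (metis insert_commute span_insert_0)

lemma pts0: "proj_pts {0} = {span {v} | v. v \<noteq> 0}"
  unfolding proj_pts_def span_ins0 by auto

lemma span_scale1: "t \<noteq> 0 \<Longrightarrow> span {t *\<^sub>R v} = span {v}"
proof
  assume t: "t \<noteq> 0"
  show "span {t *\<^sub>R v} \<subseteq> span {v}"
    by (rule span_minimal) (auto intro: span_mul span_base)
  have "v = inverse t *\<^sub>R (t *\<^sub>R v)" using t by simp
  then have "v \<in> span {t *\<^sub>R v}" by (metis span_mul span_base singletonI)
  then show "span {v} \<subseteq> span {t *\<^sub>R v}"
    by (rule_tac span_minimal) auto
qed

lemma rep_line:
  assumes "v \<noteq> 0"
  shows "\<exists>t. t \<noteq> 0 \<and> rep {0} (span {v}) = t *\<^sub>R v"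
proof -
  have ex: "\<exists>u. u \<in> span {v} \<and> u \<notin> {0}" using assms by (auto intro: span_base)
  have r: "rep {0} (span {v}) \<in> span {v} \<and> rep {0} (span {v}) \<notin> {0}"
    unfolding rep_def using someI_ex[OF ex] .
  then obtain t where "rep {0} (span {v}) = t *\<^sub>R v" by (auto simp: span_singleton)
  with r show ?thesis by auto
qed

definition sL :: "(real^'n) set \<Rightarrow> real^'n" where "sL L = sec (rep {0} L)"

lemma sL_span: "v \<noteq> 0 \<Longrightarrow> sL (span {v}) = sec v"
  using rep_line[of v] sec_scale unfolding sL_def by auto

lemma sec_span: "v \<noteq> 0 \<Longrightarrow> span {sec v} = span {v}"
  unfolding sec_def using cf_nz span_scale1 by auto

lemma sL_prop:
  assumes "L \<in> proj_pts {0}"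
  shows "L = span {sL L}" "sL L \<noteq> 0"
proof -
  obtain v where v: "v \<noteq> 0" "L = span {v}" using assms pts0 by auto
  then have e: "sL L = sec v" using sL_span by auto
  then show "L = span {sL L}" "sL L \<noteq> 0" using v sec_span sec_nz by auto
qed

lemma sL_meas: "sL \<in> borel_measurable (proj_space {0})"
  by (rule meas_out[where G=sec]) (auto simp: sec_meas span_ins0 sL_span)



lemma infdist_bound:
  assumes "W \<noteq> {}" "K > 0" "\<And>a. a \<in> W \<Longrightarrow> infdist y W \<le> K * dist x a"
  shows "infdist y W \<le> K * infdist x W"
proof -
  have "infdist y W / K \<le> (INF a\<in>W. dist x a)"
    by (rule cINF_greatest) (use assms in \<open>auto simp: field_simps\<close>)
  then have "infdist y W / K \<le> infdist x W" using infdist_notempty[OF assms(1)] by simp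
  then show ?thesis using assms(2) by (simp add: field_simps)
qed

lemma subspace_ne: "subspace W \<Longrightarrow> W \<noteq> {}"
  using subspace_0 by auto

lemma infdist_scale_le:
  fixes x :: "'a::real_normed_vector"
  assumes W: "subspace W"
  shows "infdist (c *\<^sub>R x) W \<le> \<bar>c\<bar> * infdist x W"
proof (cases "c = 0")
  case True then show ?thesis using infdist_zero[OF subspace_0[OF W]] by simp
next
  case False
  show ?thesis
  proof (rule infdist_bound[OF subspace_ne[OF W]])
    show "\<bar>c\<bar> > 0" using False by simp
    fix a assume a: "a \<in> W"
    have "infdist (c *\<^sub>R x) W \<le> dist (c *\<^sub>R x) (c *\<^sub>R a)"
      by (rule infdist_le) (use W a in \<open>simp add: subspace_scale\<close>)
    also have "\<dots> = \<bar>c\<bar> * dist x a"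
      by (simp add: dist_norm scaleR_diff_right[symmetric])
    finally show "infdist (c *\<^sub>R x) W \<le> \<bar>c\<bar> * dist x a" .
  qed
qed

lemma infdist_scale:
  fixes x :: "'a::real_normed_vector"
  assumes W: "subspace W"
  shows "infdist (c *\<^sub>R x) W = \<bar>c\<bar> * infdist x W"
proof (cases "c = 0")
  case True then show ?thesis using infdist_zero[OF subspace_0[OF W]] by simp
next
  case False
  have "infdist x W = infdist (inverse c *\<^sub>R (c *\<^sub>R x)) W" using False by simp
  also have "\<dots> \<le> \<bar>inverse c\<bar> * infdist (c *\<^sub>R x) W" by (rule infdist_scale_le[OF W])
  finally have "\<bar>c\<bar> * infdist x W \<le> infdist (c *\<^sub>R x) W"
    using False by (simp add: field_simps abs_inverse)
  with infdist_scale_le[OF W, of c x] show ?thesis by simp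
qed

lemma infdist_transl_le:
  fixes x :: "'a::real_normed_vector"
  assumes W: "subspace W" and w: "w \<in> W"
  shows "infdist (x + w) W \<le> infdist x W"
proof -
  have "infdist (x + w) W \<le> 1 * infdist x W"
  proof (rule infdist_bound[OF subspace_ne[OF W]])
    fix a assume a: "a \<in> W"
    have "infdist (x + w) W \<le> dist (x + w) (a + w)"
      by (rule infdist_le) (use W a w in \<open>simp add: subspace_add\<close>)
    then show "infdist (x + w) W \<le> 1 * dist x a" by (simp add: dist_norm)
  qed simp
  then show ?thesis by simp
qed

lemma infdist_transl:
  fixes x :: "'a::real_normed_vector"
  assumes W: "subspace W" and w: "w \<in> W"
  shows "infdist (x + w) W = infdist x W"
proof -
  have "infdist x W = infdist ((x + w) + (- w)) W" by simp
  also have "\<dots> \<le> infdist (x + w) W"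
    by (rule infdist_transl_le[OF W]) (use W w in \<open>simp add: subspace_neg\<close>)
  finally show ?thesis using infdist_transl_le[OF W w, of x] by simp
qed

lemma infdist_lin:
  fixes g :: "real^'n^'n"
  assumes W: "subspace W" and gW: "(\<lambda>x. g *v x) ` W \<subseteq> W"
  shows "infdist (g *v x) W \<le> onorm ((*v) g) * infdist x W"
proof (cases "onorm ((*v) g) = 0")
  case True
  have "norm (g *v x) \<le> onorm ((*v) g) * norm x" by (rule onorm) simp
  then have "g *v x = 0" using True by simp
  then show ?thesis using infdist_zero[OF subspace_0[OF W]] True by simp
next
  case False
  then have pos: "onorm ((*v) g) > 0" using onorm_pos_le[of "(*v) g"] by simp
  show ?thesis
  proof (rule infdist_bound[OF subspace_ne[OF W] pos])
    fix a assume a: "a \<in> W"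
    have "infdist (g *v x) W \<le> dist (g *v x) (g *v a)"
      by (rule infdist_le) (use gW a in auto)
    also have "\<dots> = norm (g *v (x - a))" by (simp add: dist_norm matrix_vector_mult_diff_distrib)
    also have "\<dots> \<le> onorm ((*v) g) * norm (x - a)" by (rule onorm) simp
    finally show "infdist (g *v x) W \<le> onorm ((*v) g) * dist x a" by (simp add: dist_norm)
  qed
qed

lemma ginv:
  fixes g :: "real^'n^'n"
  assumes "invertible g"
  shows "matrix_inv g *v (g *v x) = x" "g *v (matrix_inv g *v x) = x"
proof -
  have "g ** matrix_inv g = mat 1 \<and> matrix_inv g ** g = mat 1"
    using assms unfolding invertible_def matrix_inv_def by (rule someI_ex)
  then show "matrix_inv g *v (g *v x) = x" "g *v (matrix_inv g *v x) = x"
    by (simp_all add: matrix_vector_mul_assoc)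
qed

lemma img_eq:
  fixes g :: "real^'n^'n"
  assumes g: "invertible g" and W: "subspace W" and gW: "(\<lambda>x. g *v x) ` W \<subseteq> W"
  shows "(\<lambda>x. g *v x) ` W = W"
proof (rule subspace_dim_equal[OF _ W gW])
  show "subspace ((\<lambda>x. g *v x) ` W)"
    by (rule linear_subspace_image[OF _ W]) (simp add: matrix_vector_mul_linear)
  have "dim ((\<lambda>x. g *v x) ` W) = dim W"
    by (rule dim_image_eq) (use inj_matrix_vector_mult[OF g] in \<open>auto simp: matrix_vector_mul_linear inj_on_def inj_def\<close>)
  then show "dim W \<le> dim ((\<lambda>x. g *v x) ` W)" by simp
qed

definition Nf :: "real^'n^'n \<Rightarrow> real" where
  "Nf g = ln (max (onorm ((*v) g)) (onorm ((*v) (matrix_inv g))))"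

lemma sig_bound:
  fixes g :: "real^'n^'n"
  assumes g: "invertible g" and U: "subspace U" and gU: "(\<lambda>x. g *v x) ` U \<subseteq> U" and x: "x \<notin> U"
  shows "infdist (g *v x) U > 0" "\<bar>ln (infdist (g *v x) U / infdist x U)\<bar> \<le> Nf g"
proof -
  have cl: "closed U" by (rule closed_subspace[OF U])
  have a: "infdist x U > 0"
    using in_closed_iff_infdist_zero[OF cl subspace_ne[OF U], of x] x infdist_nonneg[of x U] by simp
  have eq: "(\<lambda>x. g *v x) ` U = U" by (rule img_eq[OF g U gU])
  have giU: "(\<lambda>x. matrix_inv g *v x) ` U \<subseteq> U"
  proof
    fix y assume "y \<in> (\<lambda>x. matrix_inv g *v x) ` U"
    then obtain u where u: "u \<in> U" "y = matrix_inv g *v u" by auto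
    then obtain w where "w \<in> U" "u = g *v w" using eq by blast
    then show "y \<in> U" using u ginv(1)[OF g] by simp
  qed
  define n1 where "n1 = onorm ((*v) g)"
  define n2 where "n2 = onorm ((*v) (matrix_inv g))"
  have b1: "infdist (g *v x) U \<le> n1 * infdist x U" unfolding n1_def by (rule infdist_lin[OF U gU])
  have b2: "infdist x U \<le> n2 * infdist (g *v x) U"
    using infdist_lin[OF U giU, of "g *v x"] ginv(1)[OF g] unfolding n2_def by simp
  have n2: "n2 \<ge> 0" unfolding n2_def by (rule onorm_pos_le) simp
  have b: "infdist (g *v x) U > 0"
  proof (rule ccontr)
    assume "\<not> ?thesis"
    then have "infdist (g *v x) U = 0" using infdist_nonneg[of "g *v x" U] by simp
    then show False using b2 a by simp
  qed
  then show "infdist (g *v x) U > 0" .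
  have "0 < n1 * infdist x U" using b1 b by linarith
  then have n1p: "n1 > 0" using a by (simp add: zero_less_mult_iff)
  have "0 < n2 * infdist (g *v x) U" using b2 a by linarith
  then have n2p: "n2 > 0" using b by (simp add: zero_less_mult_iff)
  have r1: "infdist (g *v x) U / infdist x U \<le> n1" using b1 a by (simp add: field_simps)
  have r2: "infdist x U / infdist (g *v x) U \<le> n2" using b2 b by (simp add: field_simps)
  have l1: "ln (infdist (g *v x) U / infdist x U) \<le> ln n1"
    using r1 a b n1p by (simp add: ln_le_cancel_iff)
  have l2: "ln (infdist x U / infdist (g *v x) U) \<le> ln n2"
    using r2 a b n2p by (simp add: ln_le_cancel_iff)
  have m1: "ln n1 \<le> Nf g" unfolding Nf_def n1_def[symmetric] n2_def[symmetric]
    using n1p n2p by (simp add: ln_le_cancel_iff)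
  have m2: "ln n2 \<le> Nf g" unfolding Nf_def n1_def[symmetric] n2_def[symmetric]
    using n1p n2p by (simp add: ln_le_cancel_iff)
  have "ln (infdist x U / infdist (g *v x) U) = - ln (infdist (g *v x) U / infdist x U)"
    using a b by (simp add: ln_div)
  then show "\<bar>ln (infdist (g *v x) U / infdist x U)\<bar> \<le> Nf g" using l1 l2 m1 m2 by linarith
qed



lemma mult_cont: "continuous_on UNIV (\<lambda>p::(real^'n^'m) \<times> (real^'n). fst p *v snd p)"
  unfolding matrix_vector_mult_def by (intro continuous_intros)

lemma mult_meas: "(\<lambda>p::(real^'n^'m) \<times> (real^'n). fst p *v snd p) \<in> borel_measurable borel"
  by (rule borel_measurable_continuous_onI[OF mult_cont])

lemma mult_meas_pair:
  assumes "sets M = sets (borel :: (real^'n^'m) measure)" "sets N = sets (borel :: (real^'n) measure)"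
  shows "(\<lambda>p. fst p *v snd p) \<in> borel_measurable (M \<Otimes>\<^sub>M N)"
proof -
  have "sets (M \<Otimes>\<^sub>M N) = sets (borel \<Otimes>\<^sub>M borel :: ((real^'n^'m) \<times> (real^'n)) measure)"
    using assms by (rule sets_pair_measure_cong)
  also have "\<dots> = sets borel" by (simp only: borel_prod)
  finally show ?thesis using mult_meas measurable_cong_sets by blast
qed

lemma mult_meas_pair':
  assumes "sets M = sets (borel :: (real^'n) measure)" "sets N = sets (borel :: (real^'n^'m) measure)"
  shows "(\<lambda>p. snd p *v fst p) \<in> borel_measurable (M \<Otimes>\<^sub>M N)"
proof -
  have "(\<lambda>p. fst p *v snd p) \<circ> (\<lambda>(x,y). (y,x)) \<in> borel_measurable (M \<Otimes>\<^sub>M N)"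
    by (rule measurable_comp[OF measurable_pair_swap' mult_meas_pair[OF assms(2,1)]])
  then show ?thesis by (simp add: o_def case_prod_beta)
qed

lemma AE_good:
  fixes \<mu> :: "(real^'n^'n) measure"
  assumes sets: "sets \<mu> = sets borel" and GL: "AE g in \<mu>. g \<in> GL"
    and inv: "\<forall>g\<in>Gamma \<mu>. (\<lambda>x. g *v x) ` W \<subseteq> W"
  shows "AE g in \<mu>. invertible g \<and> (\<lambda>x. g *v x) ` W \<subseteq> W"
proof -
  define F where "F = {U::(real^'n^'n) set. open U \<and> emeasure \<mu> U = 0}"
  obtain F' where F': "F' \<subseteq> F" "countable F'" "\<Union>F' = \<Union>F"
    using Lindelof[of F] unfolding F_def by auto
  have "(\<Union>U\<in>F'. U) \<in> null_sets \<mu>"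
  proof (rule null_sets_UN'[OF F'(2)])
    fix U assume "U \<in> F'"
    then have "open U" "emeasure \<mu> U = 0" using F' F_def by auto
    then show "U \<in> null_sets \<mu>" using sets by (auto simp: null_sets_def)
  qed
  then have "AE g in \<mu>. g \<notin> \<Union>F" using F'(3) by (intro AE_I'[of "\<Union>F'"]) auto
  then show ?thesis using GL
  proof eventually_elim
    case (elim g)
    have "g \<in> supp \<mu>"
      unfolding supp_def using elim F_def by (auto simp: not_less)
    then have "g \<in> Gamma \<mu>" unfolding Gamma_def by blast
    then show ?case using inv elim by (auto simp: GL_def)
  qed
qed



lemma space_st: "stationary \<mu> W \<eta> \<Longrightarrow> space \<eta> = proj_pts W"
  unfolding stationary_def by (metis sets_eq_imp_space_eq space_proj)

lemma act_line:
  fixes g :: "real^'n^'n"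
  assumes g: "invertible g" and u: "u \<noteq> 0"
  shows "act g (span {u}) = span {g *v u}" "g *v u \<noteq> 0"
proof -
  have "act g (span {u}) = span ((\<lambda>x. g *v x) ` {u})" unfolding act_def
    by (rule span_linear_image[symmetric]) (simp add: matrix_vector_mul_linear)
  then show "act g (span {u}) = span {g *v u}" by simp
  show "g *v u \<noteq> 0" using ginv(1)[OF g, of u] u by auto
qed

lemma vec_meas_lin: "(\<lambda>x. sec ((g::real^'n^'m) *v x)) \<in> borel_measurable borel"
  by (rule measurable_compose[OF borel_measurable_continuous_onI sec_meas])
     (simp add: matrix_vector_mult_linear_continuous_on)

lemma stat_lift:
  fixes \<mu> :: "(real^'n^'n) measure" and \<nu> :: "(real^'n) set measure"
  assumes sets: "sets \<mu> = sets borel" and GL: "AE g in \<mu>. invertible g" and st: "stationary \<mu> {0} \<nu>"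
  shows "distr \<nu> borel sL = distr (\<mu> \<Otimes>\<^sub>M distr \<nu> borel sL) borel (\<lambda>p. sec (fst p *v snd p))"
    (is "?n = _")
proof -
  have sp: "space \<nu> = proj_pts {0}" by (rule space_st[OF st])
  have sn: "sets \<nu> = sets (proj_space {0})" using st unfolding stationary_def by simp
  have sLm: "sL \<in> measurable \<nu> borel" using sL_meas measurable_cong_sets[OF sn refl] by blast
  have pn: "prob_space \<nu>" using st unfolding stationary_def by simp
  have pn': "prob_space ?n" by (rule prob_space.prob_space_distr[OF pn sLm])
  interpret N': prob_space ?n by (rule pn')
  have sets': "sets ?n = sets borel" by simp
  have Tm: "(\<lambda>p. sec (fst p *v snd p)) \<in> borel_measurable (\<mu> \<Otimes>\<^sub>M ?n)"
    by (rule measurable_compose[OF mult_meas_pair[OF sets sets'] sec_meas])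
  show ?thesis
  proof (rule measure_eqI)
    show "sets ?n = sets (distr (\<mu> \<Otimes>\<^sub>M ?n) borel (\<lambda>p. sec (fst p *v snd p)))" by simp
    fix B assume "B \<in> sets ?n"
    then have B: "B \<in> sets borel" by simp
    define A where "A = sL -` B \<inter> space \<nu>"
    have A: "A \<in> sets \<nu>" unfolding A_def using sLm B by (rule measurable_sets)
    have "emeasure ?n B = emeasure \<nu> A" unfolding A_def by (rule emeasure_distr[OF sLm B])
    also have "\<dots> = (\<integral>\<^sup>+ g. emeasure \<nu> (act g -` A \<inter> space \<nu>) \<partial>\<mu>)"
      using st A unfolding stationary_def by blast
    also have "\<dots> = (\<integral>\<^sup>+ g. emeasure ?n {x. sec (g *v x) \<in> B} \<partial>\<mu>)"
    proof (rule nn_integral_cong_AE)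
      show "AE g in \<mu>. emeasure \<nu> (act g -` A \<inter> space \<nu>) = emeasure ?n {x. sec (g *v x) \<in> B}"
        using GL
      proof eventually_elim
        case (elim g)
        have mB: "{x. sec (g *v x) \<in> B} \<in> sets borel"
          using measurable_sets[OF vec_meas_lin[of g] B] by (simp add: vimage_def)
        have "act g -` A \<inter> space \<nu> = sL -` {x. sec (g *v x) \<in> B} \<inter> space \<nu>"
        proof (intro set_eqI iffI)
          fix L assume L: "L \<in> act g -` A \<inter> space \<nu>"
          then have L0: "L \<in> proj_pts {0}" using sp by simp
          have e: "act g L = span {g *v sL L}" "g *v sL L \<noteq> 0"
            using act_line[OF elim sL_prop(2)[OF L0]] sL_prop(1)[OF L0] by metis+
          have "sL (act g L) \<in> B" using L unfolding A_def by simp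
          then have "sec (g *v sL L) \<in> B" using e sL_span[OF e(2)] by simp
          then show "L \<in> sL -` {x. sec (g *v x) \<in> B} \<inter> space \<nu>" using e L sL_span by auto
        next
          fix L assume L: "L \<in> sL -` {x. sec (g *v x) \<in> B} \<inter> space \<nu>"
          then have L0: "L \<in> proj_pts {0}" using sp by simp
          have e: "act g L = span {g *v sL L}" "g *v sL L \<noteq> 0"
            using act_line[OF elim sL_prop(2)[OF L0]] sL_prop(1)[OF L0] by metis+
          have "act g L \<in> proj_pts {0}" using e pts0 by auto
          moreover have "sL (act g L) \<in> B" using e L sL_span[OF e(2)] by simp
          ultimately show "L \<in> act g -` A \<inter> space \<nu>" using L sp unfolding A_def by auto
        qed
        then show ?case using emeasure_distr[OF sLm mB] by simp
      qed
    qed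
    also have "\<dots> = (\<integral>\<^sup>+ g. emeasure ?n (Pair g -` ((\<lambda>p. sec (fst p *v snd p)) -` B \<inter> space (\<mu> \<Otimes>\<^sub>M ?n))) \<partial>\<mu>)"
      by (rule nn_integral_cong) (auto simp: space_pair_measure vimage_def)
    also have "\<dots> = emeasure (\<mu> \<Otimes>\<^sub>M ?n) ((\<lambda>p. sec (fst p *v snd p)) -` B \<inter> space (\<mu> \<Otimes>\<^sub>M ?n))"
      by (rule N'.emeasure_pair_measure_alt[symmetric]) (rule measurable_sets[OF Tm B])
    also have "\<dots> = emeasure (distr (\<mu> \<Otimes>\<^sub>M ?n) borel (\<lambda>p. sec (fst p *v snd p))) B"
      by (rule emeasure_distr[OF Tm B, symmetric])
    finally show "emeasure ?n B = emeasure (distr (\<mu> \<Otimes>\<^sub>M ?n) borel (\<lambda>p. sec (fst p *v snd p))) B" .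
  qed
qed



lemma h_sec:
  assumes hom: "\<And>t x. t \<noteq> 0 \<Longrightarrow> h (t *\<^sub>R x) = h x"
  shows "h (sec y) = h y"
proof (cases "y = 0")
  case True then show ?thesis by (simp add: sec_def)
next
  case False then show ?thesis using hom cf_nz unfolding sec_def by auto
qed

lemma stat_int:
  fixes \<mu> :: "(real^'n^'n) measure" and \<nu> :: "(real^'n) set measure" and h :: "real^'n \<Rightarrow> real"
  assumes pm: "prob_space \<mu>" and sets: "sets \<mu> = sets borel" and GL: "AE g in \<mu>. invertible g"
    and st: "stationary \<mu> {0} \<nu>"
    and hm: "h \<in> borel_measurable borel" and hb: "\<And>x. \<bar>h x\<bar> \<le> K"
    and hom: "\<And>t x. t \<noteq> 0 \<Longrightarrow> h (t *\<^sub>R x) = h x"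
  shows "integral\<^sup>L (distr \<nu> borel sL) h = (\<integral>x. (\<integral>g. h (g *v x) \<partial>\<mu>) \<partial>(distr \<nu> borel sL))"
    (is "integral\<^sup>L ?n h = _")
proof -
  have sn: "sets \<nu> = sets (proj_space {0})" using st unfolding stationary_def by simp
  have sLm: "sL \<in> measurable \<nu> borel" using sL_meas measurable_cong_sets[OF sn refl] by blast
  have pn: "prob_space \<nu>" using st unfolding stationary_def by simp
  have pn': "prob_space ?n" by (rule prob_space.prob_space_distr[OF pn sLm])
  interpret M: prob_space \<mu> by (rule pm)
  interpret N': prob_space ?n by (rule pn')
  interpret P: pair_sigma_finite \<mu> ?n ..
  interpret PP: prob_space "\<mu> \<Otimes>\<^sub>M ?n" by (rule prob_space_pair) unfold_locales
  have sets': "sets ?n = sets borel" by simp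
  have Tm: "(\<lambda>p. sec (fst p *v snd p)) \<in> borel_measurable (\<mu> \<Otimes>\<^sub>M ?n)"
    by (rule measurable_compose[OF mult_meas_pair[OF sets sets'] sec_meas])
  have Hm: "(\<lambda>p. h (fst p *v snd p)) \<in> borel_measurable (\<mu> \<Otimes>\<^sub>M ?n)"
    by (rule measurable_compose[OF mult_meas_pair[OF sets sets'] hm])
  have eq: "?n = distr (\<mu> \<Otimes>\<^sub>M ?n) borel (\<lambda>p. sec (fst p *v snd p))"
    by (rule stat_lift[OF sets GL st])
  have "integral\<^sup>L ?n h = integral\<^sup>L (distr (\<mu> \<Otimes>\<^sub>M ?n) borel (\<lambda>p. sec (fst p *v snd p))) h"
    by (rule arg_cong[where f="\<lambda>M. integral\<^sup>L M h", OF eq])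
  also have "\<dots> = integral\<^sup>L (\<mu> \<Otimes>\<^sub>M ?n) (\<lambda>p. h (sec (fst p *v snd p)))"
    by (rule integral_distr[OF Tm hm])
  also have "\<dots> = integral\<^sup>L (\<mu> \<Otimes>\<^sub>M ?n) (\<lambda>p. h (fst p *v snd p))"
    using h_sec[of h, OF hom] by simp
  also have "\<dots> = integral\<^sup>L (\<mu> \<Otimes>\<^sub>M ?n) (case_prod (\<lambda>g x. h (g *v x)))"
    by (rule arg_cong[where f="integral\<^sup>L (\<mu> \<Otimes>\<^sub>M ?n)"]) (auto simp: fun_eq_iff)
  also have "\<dots> = (\<integral>x. (\<integral>g. h (g *v x) \<partial>\<mu>) \<partial>?n)"
  proof (rule P.integral_snd[symmetric])
    show "integrable (\<mu> \<Otimes>\<^sub>M ?n) (case_prod (\<lambda>g x. h (g *v x)))"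
      by (rule PP.integrable_const_bound[where B=K]) (use hb Hm in \<open>auto simp: case_prod_beta\<close>)
  qed
  finally show ?thesis .
qed



lemma int_bound:
  fixes f :: "'a \<Rightarrow> real"
  assumes fm: "f \<in> borel_measurable M" and b: "AE x in M. \<bar>f x\<bar> \<le> N x"
    and fin: "(\<integral>\<^sup>+x. ennreal (N x) \<partial>M) < \<infinity>"
  shows "integrable M f" "\<bar>integral\<^sup>L M f\<bar> \<le> enn2real (\<integral>\<^sup>+x. ennreal (N x) \<partial>M)"
proof -
  have le: "(\<integral>\<^sup>+x. ennreal (norm (f x)) \<partial>M) \<le> (\<integral>\<^sup>+x. ennreal (N x) \<partial>M)"
    by (rule nn_integral_mono_AE) (use b in \<open>auto elim!: eventually_mono intro: ennreal_leI\<close>)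
  show int: "integrable M f"
    by (rule integrableI_bounded[OF fm]) (use le fin in auto)
  have "ennreal \<bar>integral\<^sup>L M f\<bar> \<le> (\<integral>\<^sup>+x. ennreal (N x) \<partial>M)"
    using integral_norm_bound_ennreal[OF int] le by simp
  then have "enn2real (ennreal \<bar>integral\<^sup>L M f\<bar>) \<le> enn2real (\<integral>\<^sup>+x. ennreal (N x) \<partial>M)"
    using fin by (intro enn2real_mono) auto
  then show "\<bar>integral\<^sup>L M f\<bar> \<le> enn2real (\<integral>\<^sup>+x. ennreal (N x) \<partial>M)" by simp
qed

lemma max_lim: "(\<lambda>k. max a (- real k)) \<longlonglongrightarrow> a"
proof (rule tendsto_eventually)
  obtain N where "- a \<le> real N" using real_arch_simple by blast
  then show "\<forall>\<^sub>F k in sequentially. max a (- real k) = a"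
    unfolding eventually_sequentially by (intro exI[of _ N]) auto
qed

lemma max_lip: "\<bar>max a (- c) - max b (- c)\<bar> \<le> \<bar>a - b\<bar>" for a b c :: real
  unfolding max_def by auto

lemma infdist_meas: "(\<lambda>y. infdist y U) \<in> borel_measurable borel"
  by (rule borel_measurable_continuous_onI) (intro continuous_intros)

lemma gmult_meas: "(\<lambda>g::real^'n^'m. g *v x) \<in> borel_measurable borel"
proof (rule borel_measurable_continuous_onI)
  show "continuous_on UNIV (\<lambda>g::real^'n^'m. g *v x)"
    unfolding matrix_vector_mult_def by (intro continuous_intros)
qed



lemma main_V:
  fixes \<mu> :: "(real^'n^'n) measure" and n :: "(real^'n) measure" and W :: "(real^'n) set"
  assumes pm: "prob_space \<mu>" and sm: "sets \<mu> = sets borel"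
    and pn: "prob_space n" and sn: "sets n = sets borel"
    and good: "AE g in \<mu>. invertible g \<and> (\<lambda>x. g *v x) ` W \<subseteq> W"
    and W: "subspace W"
    and fin: "(\<integral>\<^sup>+g. ennreal (Nf g) \<partial>\<mu>) < \<infinity>"
    and nW: "AE x in n. x \<notin> W"
    and stat: "\<And>(h::real^'n \<Rightarrow> real) (K::real). h \<in> borel_measurable borel \<Longrightarrow> (\<And>x. \<bar>h x\<bar> \<le> K) \<Longrightarrow>
        (\<And>t x. t \<noteq> 0 \<Longrightarrow> h (t *\<^sub>R x) = h x) \<Longrightarrow> integral\<^sup>L n h = (\<integral>x. (\<integral>g. h (g *v x) \<partial>\<mu>) \<partial>n)"
  shows "(\<integral>x. (\<integral>g. ln (infdist (g *v x) W / infdist x W) \<partial>\<mu>) \<partial>n) =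
         (\<integral>x. (\<integral>g. ln (infdist (g *v x) {0} / infdist x {0}) \<partial>\<mu>) \<partial>n)"
proof -
  interpret M: prob_space \<mu> by (rule pm)
  interpret N: prob_space n by (rule pn)
  define sg :: "(real^'n) set \<Rightarrow> real^'n^'n \<Rightarrow> real^'n \<Rightarrow> real" where "sg U g x = ln (infdist (g *v x) U / infdist x U)" for U g x
  define fW :: "real^'n \<Rightarrow> real" where "fW x = ln (infdist x W / norm x)" for x
  define fn :: "nat \<Rightarrow> real^'n \<Rightarrow> real" where "fn k x = max (fW x) (- real k)" for k x
  define \<Phi> :: "(real^'n) set \<Rightarrow> real^'n \<Rightarrow> real" where "\<Phi> U x = (\<integral>g. sg U g x \<partial>\<mu>)" for U x
  define C where "C = enn2real (\<integral>\<^sup>+g. ennreal (Nf g) \<partial>\<mu>)"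
  have mp: "(\<lambda>p. snd p *v fst p) \<in> borel_measurable (n \<Otimes>\<^sub>M \<mu>)" by (rule mult_meas_pair'[OF sn sm])
  have mfst: "fst \<in> borel_measurable (n \<Otimes>\<^sub>M \<mu>)"
    using measurable_fst[of n \<mu>] measurable_cong_sets[OF refl sn] by blast
  have sgm: "(\<lambda>p. sg U (snd p) (fst p)) \<in> borel_measurable (n \<Otimes>\<^sub>M \<mu>)" for U
  proof -
    have i1: "(\<lambda>p. infdist (snd p *v fst p) U) \<in> borel_measurable (n \<Otimes>\<^sub>M \<mu>)"
      by (rule measurable_compose[OF mp infdist_meas])
    have i2: "(\<lambda>p. infdist (fst p) U) \<in> borel_measurable (n \<Otimes>\<^sub>M \<mu>)"
      by (rule measurable_compose[OF mfst infdist_meas])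
    show ?thesis unfolding sg_def by (intro borel_measurable_ln borel_measurable_divide i1 i2)
  qed
  have sg1: "(\<lambda>g. sg U g x) \<in> borel_measurable \<mu>" for U x
    using measurable_Pair2[OF sgm, of x] sn by (simp add: sets_eq_imp_space_eq)
  have \<Phi>m: "\<Phi> U \<in> borel_measurable n" for U
  proof -
    have "case_prod (\<lambda>x g. sg U g x) = (\<lambda>p. sg U (snd p) (fst p))" by (auto simp: fun_eq_iff)
    then show ?thesis unfolding \<Phi>_def using sgm
      by (intro M.borel_measurable_lebesgue_integral) simp
  qed
  have x0: "x \<noteq> 0" if "x \<notin> W" for x using that subspace_0[OF W] by auto
  have bd: "AE g in \<mu>. \<bar>sg U g x\<bar> \<le> Nf g" if U: "U \<in> {W, {0}}" and x: "x \<notin> W" for U x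
    using good
  proof eventually_elim
    case (elim g)
    show ?case
    proof (cases "U = W")
      case True
      then show ?thesis using sig_bound(2)[OF _ W _ x] elim unfolding sg_def by auto
    next
      case False
      then have "U = {0}" using U by auto
      then show ?thesis using sig_bound(2)[OF _ subspace_single_0 _, of g x] elim x0[OF x]
        unfolding sg_def by auto
    qed
  qed
  have intsg: "integrable \<mu> (\<lambda>g. sg U g x)" if "U \<in> {W, {0}}" "x \<notin> W" for U x
    by (rule int_bound(1)[OF sg1 bd[OF that] fin])
  have \<Phi>b: "\<bar>\<Phi> U x\<bar> \<le> C" if "U \<in> {W, {0}}" "x \<notin> W" for U x
    unfolding \<Phi>_def C_def by (rule int_bound(2)[OF sg1 bd[OF that] fin])
  have abssg: "(\<integral>g. \<bar>sg U g x\<bar> \<partial>\<mu>) \<le> C" if "U \<in> {W, {0}}" "x \<notin> W" for U x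
  proof -
    have "\<bar>\<integral>g. \<bar>sg U g x\<bar> \<partial>\<mu>\<bar> \<le> C" unfolding C_def
      by (rule int_bound(2)) (use sg1 bd[OF that] fin in auto)
    then show ?thesis by simp
  qed
  have fWm: "fW \<in> borel_measurable borel" unfolding fW_def
    by (intro borel_measurable_ln borel_measurable_divide infdist_meas borel_measurable_norm measurable_ident)
  have fWle: "fW x \<le> 0" for x
  proof -
    have le: "infdist x W \<le> norm x" using infdist_le[OF subspace_0[OF W], of x] by simp
    show ?thesis
    proof (cases "infdist x W = 0")
      case True then show ?thesis unfolding fW_def by simp
    next
      case False
      then have "infdist x W > 0" using infdist_nonneg[of x W] by simp
      moreover have "norm x > 0" using le \<open>infdist x W > 0\<close> by linarith
      ultimately have p: "infdist x W / norm x > 0" "infdist x W / norm x \<le> 1" using le by (auto simp: divide_le_eq_1)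
      then show ?thesis unfolding fW_def by simp
    qed
  qed
  have fWhom: "fW (t *\<^sub>R x) = fW x" if "t \<noteq> 0" for t x
    unfolding fW_def using that by (simp add: infdist_scale[OF W])
  have fnm: "fn k \<in> borel_measurable borel" for k unfolding fn_def using fWm by measurable
  have fnb: "\<bar>fn k x\<bar> \<le> real k" for k x unfolding fn_def using fWle[of x] by auto
  have fnhom: "fn k (t *\<^sub>R x) = fn k x" if "t \<noteq> 0" for k t x unfolding fn_def using fWhom[OF that] by simp
  have cob: "sg W g x - sg {0} g x = fW (g *v x) - fW x"
    if x: "x \<notin> W" and g: "invertible g" and gW: "(\<lambda>x. g *v x) ` W \<subseteq> W" for x g
  proof -
    have a: "infdist x W > 0"
      using in_closed_iff_infdist_zero[OF closed_subspace[OF W] subspace_ne[OF W], of x] x infdist_nonneg[of x W] by simp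
    have b: "infdist (g *v x) W > 0" by (rule sig_bound(1)[OF g W gW x])
    have "infdist (g *v x) {0} > 0" by (rule sig_bound(1)[OF g subspace_single_0]) (use x0[OF x] in auto)
    then have d: "norm (g *v x) > 0" by simp
    have c: "norm x > 0" using x0[OF x] by simp
    show ?thesis unfolding sg_def fW_def using a b c d by (simp add: ln_div)
  qed
  define G :: "nat \<Rightarrow> real^'n \<Rightarrow> real" where "G k x = (\<integral>g. fn k (g *v x) \<partial>\<mu>) - fn k x" for k x
  have fnj: "(\<lambda>p. fn k (snd p *v fst p)) \<in> borel_measurable (n \<Otimes>\<^sub>M \<mu>)" for k
    by (rule measurable_compose[OF mp fnm])
  have fng: "(\<lambda>g. fn k (g *v x)) \<in> borel_measurable \<mu>" for k x
    using measurable_compose[OF gmult_meas fnm] measurable_cong_sets[OF sm refl] by blast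
  have intfng: "integrable \<mu> (\<lambda>g. fn k (g *v x))" for k x
    by (rule M.integrable_const_bound[where B="real k"]) (use fnb fng in auto)
  have Ifm: "(\<lambda>x. \<integral>g. fn k (g *v x) \<partial>\<mu>) \<in> borel_measurable n" for k
  proof -
    have "case_prod (\<lambda>x g. fn k (g *v x)) = (\<lambda>p. fn k (snd p *v fst p))" by (auto simp: fun_eq_iff)
    then show ?thesis using fnj by (intro M.borel_measurable_lebesgue_integral) simp
  qed
  have Ifb: "\<bar>\<integral>g. fn k (g *v x) \<partial>\<mu>\<bar> \<le> real k" for k x
  proof -
    have "\<bar>\<integral>g. fn k (g *v x) \<partial>\<mu>\<bar> \<le> (\<integral>g. \<bar>fn k (g *v x)\<bar> \<partial>\<mu>)" by (rule integral_abs_bound)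
    also have "\<dots> \<le> (\<integral>g. real k \<partial>\<mu>)"
      by (rule integral_mono) (use fnb intfng in auto)
    finally show ?thesis by (simp add: M.prob_space)
  qed
  have fnmn: "fn k \<in> borel_measurable n" for k
    using fnm measurable_cong_sets[OF sn refl] by blast
  have intI: "integrable n (\<lambda>x. \<integral>g. fn k (g *v x) \<partial>\<mu>)" for k
    by (rule N.integrable_const_bound[where B="real k"]) (use Ifb Ifm in auto)
  have intfn: "integrable n (fn k)" for k
    by (rule N.integrable_const_bound[where B="real k"]) (use fnb fnmn in auto)
  have G0: "integral\<^sup>L n (G k) = 0" for k
  proof -
    have "integral\<^sup>L n (G k) = (\<integral>x. (\<integral>g. fn k (g *v x) \<partial>\<mu>) \<partial>n) - integral\<^sup>L n (fn k)"
      unfolding G_def by (rule Bochner_Integration.integral_diff[OF intI intfn])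
    also have "integral\<^sup>L n (fn k) = (\<integral>x. (\<integral>g. fn k (g *v x) \<partial>\<mu>) \<partial>n)"
      by (rule stat[where K="real k"]) (use fnm fnb fnhom in auto)
    finally show ?thesis by simp
  qed
  have Gm: "G k \<in> borel_measurable n" for k
    unfolding G_def using Ifm fnmn by (intro borel_measurable_diff)
  have Geq: "G k x = (\<integral>g. (fn k (g *v x) - fn k x) \<partial>\<mu>)" for k x
    unfolding G_def by (subst Bochner_Integration.integral_diff) (use intfng in \<open>auto simp: M.prob_space\<close>)
  have fdiff_m: "(\<lambda>g. fW (g *v x) - fW x) \<in> borel_measurable \<mu>" for x
  proof -
    have "(\<lambda>g. fW (g *v x)) \<in> borel_measurable \<mu>"
      using measurable_compose[OF gmult_meas fWm] measurable_cong_sets[OF sm refl] by blast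
    then show ?thesis by (intro borel_measurable_diff) auto
  qed
  have fdiff_ae: "AE g in \<mu>. fW (g *v x) - fW x = sg W g x - sg {0} g x" if x: "x \<notin> W" for x
    using good by eventually_elim (use cob[OF x] in auto)
  have fdiff_int: "integrable \<mu> (\<lambda>g. fW (g *v x) - fW x)" if x: "x \<notin> W" for x
  proof -
    have "integrable \<mu> (\<lambda>g. sg W g x - sg {0} g x)"
      using intsg[of W x] intsg[of "{0}" x] x by (intro Bochner_Integration.integrable_diff) auto
    then show ?thesis
      using integrable_cong_AE[OF fdiff_m _ fdiff_ae[OF x]] sg1 by (metis borel_measurable_diff)
  qed
  have sdiff_m: "(\<lambda>g. fn k (g *v x) - fn k x) \<in> borel_measurable \<mu>" for k x
    using fng by (intro borel_measurable_diff) auto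
  have sbound: "AE g in \<mu>. \<bar>fn k (g *v x) - fn k x\<bar> \<le> \<bar>sg W g x\<bar> + \<bar>sg {0} g x\<bar>" if x: "x \<notin> W" for k x
    using fdiff_ae[OF x]
  proof eventually_elim
    case (elim g)
    have "\<bar>fn k (g *v x) - fn k x\<bar> \<le> \<bar>fW (g *v x) - fW x\<bar>" unfolding fn_def by (rule max_lip)
    then show ?case using elim by linarith
  qed
  have Glim: "(\<lambda>k. G k x) \<longlonglongrightarrow> \<Phi> W x - \<Phi> {0} x" if x: "x \<notin> W" for x
  proof -
    have "(\<lambda>k. \<integral>g. (fn k (g *v x) - fn k x) \<partial>\<mu>) \<longlonglongrightarrow> (\<integral>g. (fW (g *v x) - fW x) \<partial>\<mu>)"
    proof (rule integral_dominated_convergence[where w="\<lambda>g. \<bar>fW (g *v x) - fW x\<bar>"])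
      show "(\<lambda>g. fW (g *v x) - fW x) \<in> borel_measurable \<mu>" by (rule fdiff_m)
      show "(\<lambda>g. fn k (g *v x) - fn k x) \<in> borel_measurable \<mu>" for k by (rule sdiff_m)
      show "integrable \<mu> (\<lambda>g. \<bar>fW (g *v x) - fW x\<bar>)" using fdiff_int[OF x] by (rule integrable_abs)
      show "AE g in \<mu>. (\<lambda>k. fn k (g *v x) - fn k x) \<longlonglongrightarrow> fW (g *v x) - fW x"
        unfolding fn_def by (intro AE_I2 tendsto_diff max_lim)
      show "AE g in \<mu>. norm (fn k (g *v x) - fn k x) \<le> \<bar>fW (g *v x) - fW x\<bar>" for k
        unfolding fn_def by (intro AE_I2) (simp add: max_lip)
    qed
    moreover have "(\<integral>g. (fW (g *v x) - fW x) \<partial>\<mu>) = \<Phi> W x - \<Phi> {0} x"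
    proof -
      have "(\<integral>g. (fW (g *v x) - fW x) \<partial>\<mu>) = (\<integral>g. (sg W g x - sg {0} g x) \<partial>\<mu>)"
        by (rule integral_cong_AE[OF fdiff_m _ fdiff_ae[OF x]]) (use sg1 in auto)
      also have "\<dots> = \<Phi> W x - \<Phi> {0} x" unfolding \<Phi>_def
        by (rule Bochner_Integration.integral_diff) (use intsg x in auto)
      finally show ?thesis .
    qed
    ultimately show ?thesis unfolding Geq by simp
  qed
  have Gb: "\<bar>G k x\<bar> \<le> 2 * C" if x: "x \<notin> W" for k x
  proof -
    have ia: "integrable \<mu> (\<lambda>g. \<bar>sg U g x\<bar>)" if "U \<in> {W, {0}}" for U
      using intsg[OF that x] by (rule integrable_abs)
    have "\<bar>G k x\<bar> \<le> (\<integral>g. \<bar>fn k (g *v x) - fn k x\<bar> \<partial>\<mu>)" unfolding Geq by (rule integral_abs_bound)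
    also have "\<dots> \<le> (\<integral>g. (\<bar>sg W g x\<bar> + \<bar>sg {0} g x\<bar>) \<partial>\<mu>)"
    proof (rule integral_mono_AE[OF _ _ sbound[OF x]])
      show "integrable \<mu> (\<lambda>g. \<bar>fn k (g *v x) - fn k x\<bar>)"
        using intfng by (intro integrable_abs Bochner_Integration.integrable_diff) auto
      show "integrable \<mu> (\<lambda>g. \<bar>sg W g x\<bar> + \<bar>sg {0} g x\<bar>)" using ia by (intro Bochner_Integration.integrable_add) auto
    qed
    also have "\<dots> = (\<integral>g. \<bar>sg W g x\<bar> \<partial>\<mu>) + (\<integral>g. \<bar>sg {0} g x\<bar> \<partial>\<mu>)"
      by (rule Bochner_Integration.integral_add) (use ia in auto)
    also have "\<dots> \<le> 2 * C" using abssg[of W x] abssg[of "{0}" x] x by simp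
    finally show ?thesis .
  qed
  have lim: "(\<lambda>k. integral\<^sup>L n (G k)) \<longlonglongrightarrow> (\<integral>x. (\<Phi> W x - \<Phi> {0} x) \<partial>n)"
  proof (rule integral_dominated_convergence[where w="\<lambda>_. 2 * C"])
    show "(\<lambda>x. \<Phi> W x - \<Phi> {0} x) \<in> borel_measurable n" using \<Phi>m by (intro borel_measurable_diff)
    show "G k \<in> borel_measurable n" for k by (rule Gm)
    show "integrable n (\<lambda>_. 2 * C)" by simp
    show "AE x in n. (\<lambda>k. G k x) \<longlonglongrightarrow> \<Phi> W x - \<Phi> {0} x" using nW by (auto elim!: eventually_mono intro: Glim)
    show "AE x in n. norm (G k x) \<le> 2 * C" for k using nW by (auto elim!: eventually_mono intro: Gb)
  qed
  then have "(\<lambda>k. 0) \<longlonglongrightarrow> (\<integral>x. (\<Phi> W x - \<Phi> {0} x) \<partial>n)" using G0 by simp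
  then have z: "(\<integral>x. (\<Phi> W x - \<Phi> {0} x) \<partial>n) = 0" using LIMSEQ_unique tendsto_const by blast
  have intPhi: "integrable n (\<Phi> U)" if "U \<in> {W, {0}}" for U
  proof (rule N.integrable_const_bound[where B=C])
    show "AE x in n. norm (\<Phi> U x) \<le> C" using nW by (auto elim!: eventually_mono intro: \<Phi>b[OF that])
  qed (rule \<Phi>m)
  have "integral\<^sup>L n (\<Phi> W) - integral\<^sup>L n (\<Phi> {0}) = 0"
    using z Bochner_Integration.integral_diff[OF intPhi intPhi, of W "{0}"] by simp
  then show ?thesis unfolding \<Phi>_def sg_def by simp
qed



lemma Phi_meas:
  fixes \<mu> :: "(real^'n^'n) measure"
  assumes pm: "prob_space \<mu>" and sm: "sets \<mu> = sets borel"
  shows "(\<lambda>x::real^'n. \<integral>g. ln (infdist (g *v x) U / infdist x U) \<partial>\<mu>) \<in> borel_measurable borel"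
proof -
  interpret M: prob_space \<mu> by (rule pm)
  have mp: "(\<lambda>p. snd p *v fst p) \<in> borel_measurable (borel \<Otimes>\<^sub>M \<mu>)" by (rule mult_meas_pair'[OF refl sm])
  have mfst: "fst \<in> borel_measurable (borel \<Otimes>\<^sub>M \<mu>)" by (rule measurable_fst)
  have i1: "(\<lambda>p. infdist (snd p *v fst p) U) \<in> borel_measurable (borel \<Otimes>\<^sub>M \<mu>)"
    by (rule measurable_compose[OF mp infdist_meas])
  have i2: "(\<lambda>p. infdist (fst p) U) \<in> borel_measurable (borel \<Otimes>\<^sub>M \<mu>)"
    by (rule measurable_compose[OF mfst infdist_meas])
  have "(\<lambda>p. ln (infdist (snd p *v fst p) U / infdist (fst p) U)) \<in> borel_measurable (borel \<Otimes>\<^sub>M \<mu>)"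
    by (intro borel_measurable_ln borel_measurable_divide i1 i2)
  moreover have "case_prod (\<lambda>x g. ln (infdist (g *v x) U / infdist x U)) = (\<lambda>p. ln (infdist (snd p *v fst p) U / infdist (fst p) U))"
    by (auto simp: fun_eq_iff)
  ultimately show ?thesis by (intro M.borel_measurable_lebesgue_integral) simp
qed

lemma sg_meas:
  fixes \<mu> :: "(real^'n^'n) measure"
  assumes sm: "sets \<mu> = sets borel"
  shows "(\<lambda>g. ln (infdist (g *v y) U / infdist y U)) \<in> borel_measurable \<mu>"
proof -
  have "(\<lambda>g. infdist (g *v y) U) \<in> borel_measurable borel"
    by (rule measurable_compose[OF gmult_meas infdist_meas])
  then have "(\<lambda>g. ln (infdist (g *v y) U / infdist y U)) \<in> borel_measurable borel" by measurable
  then show ?thesis using measurable_cong_sets[OF sm refl] by blast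
qed

lemma ratio_scale:
  fixes g :: "real^'n^'n"
  assumes U: "subspace U" and t: "t \<noteq> 0"
  shows "infdist (g *v (t *\<^sub>R u)) U / infdist (t *\<^sub>R u) U = infdist (g *v u) U / infdist u U"
  using t by (simp add: matrix_vector_mult_scaleR infdist_scale[OF U])

lemma repW:
  assumes W: "subspace W" and v: "v \<notin> W"
  shows "\<exists>c w. c \<noteq> 0 \<and> w \<in> W \<and> rep W (span (insert v W)) = c *\<^sub>R v + w"
proof -
  have ex: "\<exists>u. u \<in> span (insert v W) \<and> u \<notin> W" using v by (auto intro: span_base)
  have r: "rep W (span (insert v W)) \<in> span (insert v W) \<and> rep W (span (insert v W)) \<notin> W"
    unfolding rep_def using someI_ex[OF ex] .
  have sW: "span W = W" using W by simp
  have "rep W (span (insert v W)) \<in> {x. \<exists>k. x - k *\<^sub>R v \<in> span W}"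
    using r span_insert[of v W] by blast
  then obtain k where k: "rep W (span (insert v W)) - k *\<^sub>R v \<in> W"
    using sW by auto
  define w where "w = rep W (span (insert v W)) - k *\<^sub>R v"
  have "rep W (span (insert v W)) = k *\<^sub>R v + w" unfolding w_def by simp
  moreover have "k \<noteq> 0" using k r by auto
  ultimately show ?thesis using k w_def by blast
qed

lemma Fbar_Phi:
  fixes \<mu> :: "(real^'n^'n) measure"
  assumes W: "subspace W" and sm: "sets \<mu> = sets borel"
    and good: "AE g in \<mu>. invertible g \<and> (\<lambda>x. g *v x) ` W \<subseteq> W" and v: "v \<notin> W"
  shows "(\<integral>g. ln (infdist (g *v rep W (span (insert v W))) W / infdist (rep W (span (insert v W))) W) \<partial>\<mu>)
       = (\<integral>g. ln (infdist (g *v v) W / infdist v W) \<partial>\<mu>)"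
proof -
  obtain c w where cw: "c \<noteq> 0" "w \<in> W" "rep W (span (insert v W)) = c *\<^sub>R v + w" using repW[OF W v] by blast
  show ?thesis
  proof (rule integral_cong_AE[OF sg_meas[OF sm] sg_meas[OF sm]])
    show "AE g in \<mu>. ln (infdist (g *v rep W (span (insert v W))) W / infdist (rep W (span (insert v W))) W) =
        ln (infdist (g *v v) W / infdist v W)"
      using good
    proof eventually_elim
      case (elim g)
      have gw: "g *v w \<in> W" using elim cw(2) by auto
      have "infdist (g *v (c *\<^sub>R v + w)) W = infdist (g *v (c *\<^sub>R v)) W"
        using infdist_transl[OF W gw] by (simp add: matrix_vector_right_distrib)
      moreover have "infdist (c *\<^sub>R v + w) W = infdist (c *\<^sub>R v) W" by (rule infdist_transl[OF W cw(2)])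
      ultimately show ?case using cw ratio_scale[OF W cw(1), of g v] by simp
    qed
  qed
qed

lemma line_sub: "subspace W \<Longrightarrow> span {v} \<subseteq> W \<longleftrightarrow> v \<in> W"
  by (meson insert_subset span_base span_minimal subset_iff empty_subsetI)

lemma span_line_W:
  assumes W: "subspace W"
  shows "span (span {v} \<union> W) = span (insert v W)"
proof
  show "span (span {v} \<union> W) \<subseteq> span (insert v W)"
  proof (rule span_minimal)
    have "span {v} \<subseteq> span (insert v W)" by (rule span_mono) auto
    moreover have "W \<subseteq> span (insert v W)" by (meson span_superset subset_insertI subset_trans)
    ultimately show "span {v} \<union> W \<subseteq> span (insert v W)" by auto
  qed simp
  show "span (insert v W) \<subseteq> span (span {v} \<union> W)"
    by (rule span_mono) (auto intro: span_base)
qed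

lemma W_notin: "subspace W \<Longrightarrow> W \<notin> proj_pts W"
  unfolding proj_pts_def by (auto intro: span_base)



theorem lemma4p3:
  fixes \<mu> :: "(real^'n^'n) measure" and W :: "(real^'n) set"
    and \<nu> nubar :: "(real^'n) set measure"
  assumes "prob_space \<mu>" and "sets \<mu> = sets borel" and "AE g in \<mu>. g \<in> GL"
    and "(\<integral>\<^sup>+ g. ennreal (ln (max (onorm ((*v) g)) (onorm ((*v) (matrix_inv g))))) \<partial>\<mu>) < \<infinity>"
    and "subspace W" and "\<forall>g\<in>Gamma \<mu>. (\<lambda>x. g *v x) ` W \<subseteq> W"
    and "ergodic \<mu> W nubar"
    and "stationary \<mu> {0} \<nu>"
    and "emeasure \<nu> {L \<in> space \<nu>. L \<subseteq> W} = 0"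
    and "\<forall>A\<in>sets nubar. emeasure nubar A = emeasure \<nu> ((\<lambda>L. span (L \<union> W)) -` A \<inter> space \<nu>)"
  shows "alpha \<mu> W nubar = alpha \<mu> {0} \<nu>"
proof -
  note pm = assms(1) and sm = assms(2) and W = assms(5) and st = assms(8) and Z0 = assms(9) and push = assms(10)
  have good: "AE g in \<mu>. invertible g \<and> (\<lambda>x. g *v x) ` W \<subseteq> W"
    by (rule AE_good[OF sm assms(3) assms(6)])
  have GLi: "AE g in \<mu>. invertible g" using good by (auto elim!: eventually_mono)
  have fin: "(\<integral>\<^sup>+g. ennreal (Nf g) \<partial>\<mu>) < \<infinity>" unfolding Nf_def by (rule assms(4))
  have stb: "stationary \<mu> W nubar" using assms(7) unfolding ergodic_def by simp
  have sp: "space \<nu> = proj_pts {0}" by (rule space_st[OF st])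
  have spb: "space nubar = proj_pts W" by (rule space_st[OF stb])
  have sn: "sets \<nu> = sets (proj_space {0})" using st unfolding stationary_def by simp
  have snb: "sets nubar = sets (proj_space W)" using stb unfolding stationary_def by simp
  have pnu: "prob_space \<nu>" using st unfolding stationary_def by simp
  have pnb: "prob_space nubar" using stb unfolding stationary_def by simp
  have sLm: "sL \<in> measurable \<nu> borel" using sL_meas measurable_cong_sets[OF sn refl] by blast
  define n where "n = distr \<nu> borel sL"
  have pn: "prob_space n" unfolding n_def by (rule prob_space.prob_space_distr[OF pnu sLm])
  have snn: "sets n = sets borel" unfolding n_def by simp
  have Wb: "W \<in> sets borel" using closed_subspace[OF W] by (simp add: borel_closed)
  have Zset: "sL -` W \<inter> space \<nu> = {L \<in> space \<nu>. L \<subseteq> W}"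
  proof (intro set_eqI iffI)
    fix L assume L: "L \<in> sL -` W \<inter> space \<nu>"
    then have "L = span {sL L}" using sL_prop(1) sp by auto
    then show "L \<in> {L \<in> space \<nu>. L \<subseteq> W}" using L line_sub[OF W] by auto
  next
    fix L assume L: "L \<in> {L \<in> space \<nu>. L \<subseteq> W}"
    then have "L = span {sL L}" using sL_prop(1) sp by auto
    then show "L \<in> sL -` W \<inter> space \<nu>" using L line_sub[OF W] by auto
  qed
  have nW: "AE x in n. x \<notin> W"
  proof (rule AE_I')
    have "emeasure n W = 0" unfolding n_def using emeasure_distr[OF sLm Wb] Zset Z0 by simp
    then show "W \<in> null_sets n" using Wb snn by auto
  qed auto
  have stat: "integral\<^sup>L n h = (\<integral>x. (\<integral>g. h (g *v x) \<partial>\<mu>) \<partial>n)"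
    if "h \<in> borel_measurable borel" "\<And>x. \<bar>h x\<bar> \<le> K" "\<And>t x. t \<noteq> 0 \<Longrightarrow> h (t *\<^sub>R x) = h x"
    for h :: "real^'n \<Rightarrow> real" and K
    unfolding n_def by (rule stat_int[OF pm sm GLi st that])
  have mainV: "(\<integral>x. (\<integral>g. ln (infdist (g *v x) W / infdist x W) \<partial>\<mu>) \<partial>n) =
         (\<integral>x. (\<integral>g. ln (infdist (g *v x) {0} / infdist x {0}) \<partial>\<mu>) \<partial>n)"
    by (rule main_V[OF pm sm pn snn good W fin nW stat])
  have a0: "alpha \<mu> {0} \<nu> = (\<integral>x. (\<integral>g. ln (infdist (g *v x) {0} / infdist x {0}) \<partial>\<mu>) \<partial>n)"
  proof -
    have "alpha \<mu> {0} \<nu> = (\<integral>L. (\<lambda>x. \<integral>g. ln (infdist (g *v x) {0} / infdist x {0}) \<partial>\<mu>) (sL L) \<partial>\<nu>)"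
      unfolding alpha_def
    proof (rule Bochner_Integration.integral_cong[OF refl])
      fix L assume L: "L \<in> space \<nu>"
      then have L0: "L \<in> proj_pts {0}" using sp by simp
      obtain t where t: "t \<noteq> 0" "rep {0} (span {sL L}) = t *\<^sub>R sL L"
        using rep_line[OF sL_prop(2)[OF L0]] by blast
      have r: "rep {0} L = t *\<^sub>R sL L" using t sL_prop(1)[OF L0] by metis
      show "(\<integral>g. ln (infdist (g *v rep {0} L) {0} / infdist (rep {0} L) {0}) \<partial>\<mu>) =
            (\<lambda>x. \<integral>g. ln (infdist (g *v x) {0} / infdist x {0}) \<partial>\<mu>) (sL L)"
        unfolding r by (simp only: ratio_scale[OF subspace_single_0 t(1)])
    qed
    also have "\<dots> = (\<integral>x. (\<integral>g. ln (infdist (g *v x) {0} / infdist x {0}) \<partial>\<mu>) \<partial>n)"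
      unfolding n_def by (rule integral_distr[OF sLm Phi_meas[OF pm sm], symmetric])
    finally show ?thesis .
  qed
  obtain p0 where p0: "p0 \<in> proj_pts W" using prob_space.not_empty[OF pnb] spb by auto
  define pr where "pr L = (if L \<subseteq> W then p0 else span (L \<union> W))" for L :: "(real^'n) set"
  have pr_line: "pr (span {v}) = span (insert v W)" if "v \<notin> W" for v
    unfolding pr_def using that line_sub[OF W, of v] span_line_W[OF W, of v] by simp
  have prm: "pr \<in> measurable \<nu> (proj_space W)"
  proof -
    have "pr \<in> measurable (proj_space {0}) (proj_space W)"
    proof (rule meas_into)
      show "pr \<in> space (proj_space {0}) \<rightarrow> proj_pts W"
      proof
        fix L :: "(real^'n) set" assume "L \<in> space (proj_space {0})"
        then obtain v where v: "v \<noteq> 0" "L = span {v}" using pts0 by auto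
        show "pr L \<in> proj_pts W"
        proof (cases "v \<in> W")
          case True then show ?thesis using v line_sub[OF W] p0 unfolding pr_def by auto
        next
          case False then show ?thesis using v pr_line pts_in by auto
        qed
      qed
      fix A assume A: "A \<subseteq> proj_pts W" "{v. v \<notin> W \<and> span (insert v W) \<in> A} \<in> sets borel"
      show "pr -` A \<inter> space (proj_space {0}) \<in> sets (proj_space {0})"
      proof (rule gen_sets)
        show "pr -` A \<inter> space (proj_space {0}) \<subseteq> proj_pts {0}" by simp
        have 0: "0 \<in> W" using subspace_0[OF W] .
        have eq: "{v. v \<notin> {0} \<and> span (insert v {0}) \<in> pr -` A \<inter> space (proj_space {0})} =
              {v. v \<noteq> 0 \<and> v \<in> W \<and> p0 \<in> A} \<union> {v. v \<notin> W \<and> span (insert v W) \<in> A}"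
        proof (intro set_eqI iffI)
          fix v assume "v \<in> {v. v \<notin> {0} \<and> span (insert v {0}) \<in> pr -` A \<inter> space (proj_space {0})}"
          then have v: "v \<noteq> 0" "pr (span {v}) \<in> A" by (auto simp: span_ins0)
          show "v \<in> {v. v \<noteq> 0 \<and> v \<in> W \<and> p0 \<in> A} \<union> {v. v \<notin> W \<and> span (insert v W) \<in> A}"
          proof (cases "v \<in> W")
            case True then show ?thesis using v line_sub[OF W] unfolding pr_def by auto
          next
            case False then show ?thesis using v pr_line by auto
          qed
        next
          fix v assume v: "v \<in> {v. v \<noteq> 0 \<and> v \<in> W \<and> p0 \<in> A} \<union> {v. v \<notin> W \<and> span (insert v W) \<in> A}"
          then have v0: "v \<noteq> 0" using 0 by auto
          then have sp0: "span {v} \<in> proj_pts {0}" using pts0 by auto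
          have "pr (span {v}) \<in> A"
          proof (cases "v \<in> W")
            case True then show ?thesis using v line_sub[OF W] unfolding pr_def by auto
          next
            case False then show ?thesis using v pr_line by auto
          qed
          then show "v \<in> {v. v \<notin> {0} \<and> span (insert v {0}) \<in> pr -` A \<inter> space (proj_space {0})}"
            using v0 sp0 by (simp add: span_ins0)
        qed
        have "{v. v \<noteq> 0 \<and> v \<in> W \<and> p0 \<in> A} \<in> sets borel"
        proof (cases "p0 \<in> A")
          case True
          then have "{v. v \<noteq> 0 \<and> v \<in> W \<and> p0 \<in> A} = W - {0}" by auto
          then show ?thesis using Wb by auto
        qed simp
        then show "{v. v \<notin> {0} \<and> span (insert v {0}) \<in> pr -` A \<inter> space (proj_space {0})} \<in> sets borel"
          unfolding eq using A(2) by auto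
      qed
    qed
    then show ?thesis using measurable_cong_sets[OF sn refl] by blast
  qed
  define Fb :: "(real^'n) set \<Rightarrow> real" where "Fb L = (\<integral>g. ln (infdist (g *v rep W L) W / infdist (rep W L) W) \<partial>\<mu>)" for L
  have FbP: "Fb (span (insert v W)) = (\<integral>g. ln (infdist (g *v v) W / infdist v W) \<partial>\<mu>)" if "v \<notin> W" for v
    unfolding Fb_def by (rule Fbar_Phi[OF W sm good that])
  have Fbm: "Fb \<in> borel_measurable (proj_space W)"
    by (rule meas_out[OF W Phi_meas[OF pm sm] FbP])
  have Zs: "{L \<in> space \<nu>. L \<subseteq> W} \<in> sets \<nu>"
  proof -
    have "{L \<in> space \<nu>. L \<subseteq> W} \<in> sets (proj_space {0})"
    proof (rule gen_sets)
      show "{L \<in> space \<nu>. L \<subseteq> W} \<subseteq> proj_pts {0}" using sp by auto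
      have "{v. v \<notin> {0} \<and> span (insert v {0}) \<in> {L \<in> space \<nu>. L \<subseteq> W}} = W - {0}"
        using line_sub[OF W] pts0 sp by (auto simp: span_ins0)
      then show "{v. v \<notin> {0} \<and> span (insert v {0}) \<in> {L \<in> space \<nu>. L \<subseteq> W}} \<in> sets borel"
        using Wb by auto
    qed
    then show ?thesis using sn by simp
  qed
  have nubar_eq: "nubar = distr \<nu> (proj_space W) pr"
  proof (rule measure_eqI)
    show "sets nubar = sets (distr \<nu> (proj_space W) pr)" using snb by simp
    fix A assume A: "A \<in> sets nubar"
    have As: "A \<in> sets (proj_space W)" using A snb by simp
    have Asub: "A \<subseteq> proj_pts W" using sets.sets_into_space[OF A] spb by simp
    have seq: "(\<lambda>L. span (L \<union> W)) -` A \<inter> space \<nu> = (pr -` A \<inter> space \<nu>) - {L \<in> space \<nu>. L \<subseteq> W}"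
    proof (intro set_eqI iffI)
      fix L assume L: "L \<in> (\<lambda>L. span (L \<union> W)) -` A \<inter> space \<nu>"
      have "\<not> L \<subseteq> W"
      proof
        assume "L \<subseteq> W"
        then have "span (L \<union> W) = W" using W by (simp add: Un_absorb1)
        then show False using L Asub W_notin[OF W] by auto
      qed
      then show "L \<in> (pr -` A \<inter> space \<nu>) - {L \<in> space \<nu>. L \<subseteq> W}" using L unfolding pr_def by auto
    next
      fix L assume "L \<in> (pr -` A \<inter> space \<nu>) - {L \<in> space \<nu>. L \<subseteq> W}"
      then show "L \<in> (\<lambda>L. span (L \<union> W)) -` A \<inter> space \<nu>" unfolding pr_def by (auto split: if_splits)
    qed
    have "emeasure nubar A = emeasure \<nu> ((\<lambda>L. span (L \<union> W)) -` A \<inter> space \<nu>)" using push A by blast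
    also have "\<dots> = emeasure \<nu> (pr -` A \<inter> space \<nu>)"
      unfolding seq by (rule emeasure_Diff_null_set) (use Zs Z0 measurable_sets[OF prm As] in auto)
    also have "\<dots> = emeasure (distr \<nu> (proj_space W) pr) A" by (rule emeasure_distr[OF prm As, symmetric])
    finally show "emeasure nubar A = emeasure (distr \<nu> (proj_space W) pr) A" .
  qed
  have aW: "alpha \<mu> W nubar = (\<integral>x. (\<integral>g. ln (infdist (g *v x) W / infdist x W) \<partial>\<mu>) \<partial>n)"
  proof -
    have "alpha \<mu> W nubar = integral\<^sup>L nubar Fb" unfolding alpha_def Fb_def by simp
    also have "\<dots> = integral\<^sup>L (distr \<nu> (proj_space W) pr) Fb" using nubar_eq by simp
    also have "\<dots> = (\<integral>L. Fb (pr L) \<partial>\<nu>)" by (rule integral_distr[OF prm Fbm])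
    also have "\<dots> = (\<integral>L. (\<lambda>x. \<integral>g. ln (infdist (g *v x) W / infdist x W) \<partial>\<mu>) (sL L) \<partial>\<nu>)"
    proof (rule integral_cong_AE)
      show "(\<lambda>L. Fb (pr L)) \<in> borel_measurable \<nu>" by (rule measurable_compose[OF prm Fbm])
      show "(\<lambda>L. (\<lambda>x. \<integral>g. ln (infdist (g *v x) W / infdist x W) \<partial>\<mu>) (sL L)) \<in> borel_measurable \<nu>"
        by (rule measurable_compose[OF sLm Phi_meas[OF pm sm]])
      have "AE L in \<nu>. sL L \<notin> W"
        using nW unfolding n_def by (subst (asm) AE_distr_iff[OF sLm]) (use Wb in \<open>auto simp: Compl_eq[symmetric]\<close>)
      then show "AE L in \<nu>. Fb (pr L) = (\<lambda>x. \<integral>g. ln (infdist (g *v x) W / infdist x W) \<partial>\<mu>) (sL L)"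
        using AE_space
      proof eventually_elim
        case (elim L)
        then have L: "sL L \<notin> W" and L0: "L \<in> proj_pts {0}" using sp by auto
        have "pr L = span (insert (sL L) W)" using pr_line[OF L] sL_prop(1)[OF L0] by metis
        then show ?case using FbP[OF L] by simp
      qed
    qed
    also have "\<dots> = (\<integral>x. (\<integral>g. ln (infdist (g *v x) W / infdist x W) \<partial>\<mu>) \<partial>n)"
      unfolding n_def by (rule integral_distr[OF sLm Phi_meas[OF pm sm], symmetric])
    finally show ?thesis .
  qed
  show ?thesis using aW a0 mainV by simp
qed

end
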